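(* Let $c=q_1^{a_1}\cdots q_\omega^{a_\omega}$ with $q_1,\dots,q_\omega$ distinct primes and $a_i\ge1$. If $a_i\ge 2$ for some $i$, then $E_c(q_i)=\frac{\varphi(c)}{q_i}$.
   Context: $\varphi$ is Euler's totient function. For a positive integer $c$ with distinct prime factors $q_1,\dots,q_\omega$ and real $x\ne 0$, $$E_c(x)=\sum_{S\subseteq\{1,\dots,\omega\}}(-1)^{|S|}\left\lfloor \frac{c}{x\prod_{j\in S}q_j}\right\rfloor.$$ *)

theory Defs
  imports "HOL-Number_Theory.Number_Theory"
begin

definition E :: "nat \<Rightarrow> real \<Rightarrow> int" where
  "E c x = (\<Sum>S\<in>Pow (prime_factors c).
      (-1) ^ card S * \<lfloor>real c / (x * real (\<Prod>q\<in>S. q))\<rfloor>)"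

end

theory Submission
  imports Defs
begin

lemma prod_primes_dvd:
  fixes d :: nat
  assumes "finite S" "\<forall>p\<in>S. prime p \<and> p dvd d"
  shows "(\<Prod>p\<in>S. p) dvd d"
  using assms
proof (induction S rule: finite_induct)
  case empty then show ?case by simp
next
  case (insert x F)
  have px: "prime x" "x dvd d" using insert.prems by auto
  have "\<not> x dvd (\<Prod>p\<in>F. p)"
  proof
    assume "x dvd (\<Prod>p\<in>F. p)"
    then obtain y where "y \<in> F" "x dvd y" using prime_dvd_prod_iff[OF insert.hyps(1) px(1)] by auto
    moreover have "prime y" using insert.prems \<open>y \<in> F\<close> by auto
    ultimately have "x = y" using px(1) using primes_dvd_imp_eq by blast
    then show False using \<open>y \<in> F\<close> insert.hyps(2) by simp
  qed
  then have "coprime x (\<Prod>p\<in>F. p)" using px(1) by (simp add: prime_imp_coprime)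
  moreover have "(\<Prod>p\<in>F. p) dvd d" using insert by auto
  ultimately have "x * (\<Prod>p\<in>F. p) dvd d" using px(2) by (simp add: divides_mult)
  then show ?case using insert.hyps by simp
qed

theorem lemma3:
  fixes c q :: nat
  assumes "c > 0" and "prime q" and "q ^ 2 dvd c"
  shows "real_of_int (E c (real q)) = real (totient c) / real q"
proof -
  let ?P = "prime_factors c"
  obtain k where k: "c = q ^ 2 * k" using assms(3) by (elim dvdE)
  define d where "d = q * k"
  have cd: "c = q * d" unfolding d_def k by (simp add: power2_eq_square)
  have qd: "q dvd d" unfolding d_def by simp
  have dvd: "q * (\<Prod>p\<in>S. p) dvd c" if "S \<subseteq> ?P" for S
  proof -
    have "\<forall>p\<in>S. prime p \<and> p dvd d"
    proof
      fix p assume "p \<in> S"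
      then have pp: "prime p" "p dvd c" using that by auto
      show "prime p \<and> p dvd d"
      proof (cases "p = q")
        case True then show ?thesis using pp qd by simp
      next
        case False
        then have "\<not> p dvd q" using pp(1) assms(2) using primes_dvd_imp_eq by blast
        then show ?thesis using pp cd prime_dvd_mult_iff by blast
      qed
    qed
    moreover have "finite S" using that finite_subset by blast
    ultimately show ?thesis using prod_primes_dvd cd by auto
  qed
  have qpos: "real q > 0" using assms(2) prime_gt_0_nat by simp
  have trm: "real_of_int ((-1) ^ card S * \<lfloor>real c / (real q * real (\<Prod>p\<in>S. p))\<rfloor>)
        = real c / real q * (\<Prod>p\<in>S. - 1 / real p)" if S: "S \<subseteq> ?P" for S
  proof -
    obtain k where k: "c = q * (\<Prod>p\<in>S. p) * k" using dvd[OF S] by blast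
    have fS: "finite S" using S finite_subset by blast
    have ppos: "real (\<Prod>p\<in>S. p) > 0"
    proof -
      have "0 < (\<Prod>p\<in>S. p)"
        using S by (intro prod_pos) (auto intro: prime_gt_0_nat)
      then show ?thesis by (simp only: of_nat_0_less_iff)
    qed
    have "real c / (real q * real (\<Prod>p\<in>S. p)) = real k"
      using k qpos ppos by simp
    then have "\<lfloor>real c / (real q * real (\<Prod>p\<in>S. p))\<rfloor> = int k" by simp
    moreover have "(\<Prod>p\<in>S. - 1 / real p) = (-1) ^ card S / real (\<Prod>p\<in>S. p)"
    proof -
      have "(\<Prod>p\<in>S. - 1 / real p) = (\<Prod>p\<in>S. (- 1::real)) / (\<Prod>p\<in>S. real p)"
        by (rule prod_dividef)
      also have "\<dots> = (-1) ^ card S / real (\<Prod>p\<in>S. p)"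
        by (simp only: prod_constant of_nat_prod)
      finally show ?thesis .
    qed
    ultimately show ?thesis using k qpos ppos by (simp add: field_simps)
  qed
  have "real_of_int (E c (real q)) = (\<Sum>S\<in>Pow ?P. real c / real q * (\<Prod>p\<in>S. - 1 / real p))"
    unfolding E_def of_int_sum by (intro sum.cong refl trm) auto
  also have "\<dots> = real c / real q * (\<Sum>S\<in>Pow ?P. (\<Prod>p\<in>S. - 1 / real p) * (\<Prod>p\<in>?P-S. 1))"
    by (simp add: sum_distrib_left)
  also have "(\<Sum>S\<in>Pow ?P. (\<Prod>p\<in>S. - 1 / real p) * (\<Prod>p\<in>?P-S. 1)) = (\<Prod>p\<in>?P. - 1 / real p + 1)"
    by (rule prod_add[symmetric]) simp
  also have "\<dots> = (\<Prod>p\<in>?P. 1 - 1 / real p)" by simp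
  also have "real c / real q * \<dots> = real (totient c) / real q"
    by (simp add: totient_formula2)
  finally show ?thesis .
qed

end
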